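(* Let $A\in\mathcal{C}^{n\times n}$ be diagonalizable with eigenvalues $\nu_1,\dots,\nu_n$ (with multiplicity) that are at most finite and satisfy $$1=\nu_1[0]>|\nu_2[0]|\ge\dots\ge|\nu_n[0]|.$$ Let $\mathbf x\in\mathcal{C}^n$ be written as $\mathbf x=\mathbf w_1+\dots+\mathbf w_n$, where $\mathbf w_j$ satisfies $A\mathbf w_j=\nu_j\mathbf w_j$, and assume (i) all $\mathbf w_j$ have at most finite entries, and (ii) $\mathbf w_1[0]\ne\mathbf 0$. Let $\boldsymbol\xi_k:=\sum_{j=2}^n(\nu_j/\nu_1)^k\mathbf w_j$. Then: 1. The sequence $(\boldsymbol\xi_k)_k$ is regular (coordinatewise) and $\boldsymbol\xi_k\xrightarrow{wk}\mathbf 0$. 2. $\dfrac1{\|\mathbf w_1+\boldsymbol\xi_k\|_2}\xrightarrow{wk}\dfrac1{\|\mathbf w_1\|_2}$. 2*. If moreover there is a unique index $i_0$ with $|\mathbf w_1^{i_0}[0]|=\max_i|\mathbf w_1^i[0]|$, then $\dfrac1{\|\mathbf w_1+\boldsymbol\xi_k\|_{\max}}\xrightarrow{wk}\dfrac1{\|\mathbf w_1\|_{\max}}$.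
   Context: The Levi-Civita field $\mathcal{R}$ (resp. $\mathcal{C}$) is the set of functions $a:\mathbb Q\to\mathbb R$ (resp. $\mathbb C$) with left-finite support (for every $r\in\mathbb Q$ only finitely many $q<r$ with $a(q)\ne0$), written $a[q]:=a(q)$; addition is pointwise, multiplication is $(ab)[q]=\sum_{q_1+q_2=q}a[q_1]b[q_2]$; $\mathcal{R}$ is a real closed ordered field ($a\succ b$ iff $(a-b)[\lambda(a-b)]>0$) and $\mathcal{C}=\mathcal{R}(i)$ is algebraically closed. $\operatorname{supp}(a)=\{q:a[q]\ne0\}$, $\lambda(a)=\min\operatorname{supp}(a)$ ($\lambda(0)=+\infty$); $a$ is at most finite if $\lambda(a)\ge0$. Absolute value: on $\mathcal{R}$, $|a|=a$ if $a\succeq0$ and $-a$ otherwise; on $\mathcal{C}$, $|a+ib|=\sqrt{a^2+b^2}$ for $a,b\in\mathcal{R}$. For $r\in\mathbb Q$, $\|a\|_r:=\sup_{q\le r}|a[q]|\in\mathbb R$. Weak convergence $a_n\xrightarrow{wk}a$: for every real $r>0$ there is $N_0$ with $\|a_n-a\|_{1/r}<r$ for all $n>N_0$. A sequence is regular if the union of supports of its terms is left-finite. For vectors $\mathbf x=(\mathbf x^1,\dots,\mathbf x^n)^T$, weak convergence and regularity are meant coordinatewise, $\mathbf x[0]:=(\mathbf x^1[0],\dots,\mathbf x^n[0])\in\mathbb C^n$, $\|\mathbf x\|_{\max}=\max_i|\mathbf x^i|$ and $\|\mathbf x\|_2=\sqrt{|\mathbf x^1|^2+\dots+|\mathbf x^n|^2}$.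 *)

theory Defs
  imports Complex_Main
begin

text \<open>Elements of the Levi-Civita field C are represented as functions rat => complex
  with left-finite support; R is the subset of real-valued such functions.
  Vectors in C^n are maps nat => lcf (coordinates 1..n), matrices nat => nat => lcf.\<close>

type_synonym lcf = "rat \<Rightarrow> complex"

definition left_finite :: "rat set \<Rightarrow> bool" where
  "left_finite S \<longleftrightarrow> (\<forall>r. finite {q \<in> S. q < r})"

definition lsupp :: "lcf \<Rightarrow> rat set" where
  "lsupp a = {q. a q \<noteq> 0}"

definition is_LC :: "lcf \<Rightarrow> bool" where
  "is_LC a \<longleftrightarrow> left_finite (lsupp a)"

definition is_LR :: "lcf \<Rightarrow> bool" where
  "is_LR a \<longleftrightarrow> is_LC a \<and> (\<forall>q. Im (a q) = 0)"

definition lc_zero :: lcf where "lc_zero = (\<lambda>q. 0)"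
definition lc_one :: lcf where "lc_one = (\<lambda>q. if q = 0 then 1 else 0)"
definition lc_add :: "lcf \<Rightarrow> lcf \<Rightarrow> lcf" where "lc_add a b = (\<lambda>q. a q + b q)"
definition lc_diff :: "lcf \<Rightarrow> lcf \<Rightarrow> lcf" where "lc_diff a b = (\<lambda>q. a q - b q)"

text \<open>(ab)[q] = sum over q1+q2=q of a[q1] b[q2] (a finite sum for left-finite a, b).\<close>
definition lc_mult :: "lcf \<Rightarrow> lcf \<Rightarrow> lcf" where
  "lc_mult a b = (\<lambda>q. \<Sum>q1\<in>{q1. a q1 \<noteq> 0 \<and> b (q - q1) \<noteq> 0}. a q1 * b (q - q1))"

definition lc_pow :: "lcf \<Rightarrow> nat \<Rightarrow> lcf" where
  "lc_pow a k = ((lc_mult a) ^^ k) lc_one"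

definition lc_inverse :: "lcf \<Rightarrow> lcf" where
  "lc_inverse a = (THE b. is_LC b \<and> lc_mult a b = lc_one)"

definition lc_divide :: "lcf \<Rightarrow> lcf \<Rightarrow> lcf" where
  "lc_divide a b = lc_mult a (lc_inverse b)"

definition lc_sum :: "('i \<Rightarrow> lcf) \<Rightarrow> 'i set \<Rightarrow> lcf" where
  "lc_sum f I = (\<lambda>q. \<Sum>i\<in>I. f i q)"

definition at_most_finite :: "lcf \<Rightarrow> bool" where
  "at_most_finite a \<longleftrightarrow> (\<forall>q. a q \<noteq> 0 \<longrightarrow> 0 \<le> q)"

definition lam :: "lcf \<Rightarrow> rat" where
  "lam a = (LEAST q. a q \<noteq> 0)"

definition lr_pos :: "lcf \<Rightarrow> bool" where
  "lr_pos a \<longleftrightarrow> a \<noteq> lc_zero \<and> Re (a (lam a)) > 0"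

definition lr_nonneg :: "lcf \<Rightarrow> bool" where
  "lr_nonneg a \<longleftrightarrow> a = lc_zero \<or> lr_pos a"

definition lr_le :: "lcf \<Rightarrow> lcf \<Rightarrow> bool" where
  "lr_le a b \<longleftrightarrow> lr_nonneg (lc_diff b a)"

definition lr_sqrt :: "lcf \<Rightarrow> lcf" where
  "lr_sqrt a = (THE y. is_LR y \<and> lr_nonneg y \<and> lc_mult y y = a)"

definition lc_re :: "lcf \<Rightarrow> lcf" where "lc_re z = (\<lambda>q. complex_of_real (Re (z q)))"
definition lc_im :: "lcf \<Rightarrow> lcf" where "lc_im z = (\<lambda>q. complex_of_real (Im (z q)))"

definition lc_abs :: "lcf \<Rightarrow> lcf" where
  "lc_abs z = lr_sqrt (lc_add (lc_mult (lc_re z) (lc_re z)) (lc_mult (lc_im z) (lc_im z)))"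

definition lc_seminorm :: "real \<Rightarrow> lcf \<Rightarrow> real" where
  "lc_seminorm t a = Sup {cmod (a q) | q. real_of_rat q \<le> t}"

definition wk_conv :: "(nat \<Rightarrow> lcf) \<Rightarrow> lcf \<Rightarrow> bool" where
  "wk_conv s a \<longleftrightarrow>
     (\<forall>r::real. r > 0 \<longrightarrow> (\<exists>N0::nat. \<forall>m. m > N0 \<longrightarrow> lc_seminorm (1 / r) (lc_diff (s m) a) < r))"

definition regular_seq :: "(nat \<Rightarrow> lcf) \<Rightarrow> bool" where
  "regular_seq s \<longleftrightarrow> left_finite (\<Union>k. lsupp (s k))"

definition vnorm2 :: "nat \<Rightarrow> (nat \<Rightarrow> lcf) \<Rightarrow> lcf" where
  "vnorm2 n v = lr_sqrt (lc_sum (\<lambda>i. lc_mult (lc_abs (v i)) (lc_abs (v i))) {1..n})"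

definition vnorm_max :: "nat \<Rightarrow> (nat \<Rightarrow> lcf) \<Rightarrow> lcf" where
  "vnorm_max n v = (THE m. (\<exists>i\<in>{1..n}. m = lc_abs (v i)) \<and> (\<forall>i\<in>{1..n}. lr_le (lc_abs (v i)) m))"

definition mat_vec :: "nat \<Rightarrow> (nat \<Rightarrow> nat \<Rightarrow> lcf) \<Rightarrow> (nat \<Rightarrow> lcf) \<Rightarrow> (nat \<Rightarrow> lcf)" where
  "mat_vec n A v = (\<lambda>i. lc_sum (\<lambda>j. lc_mult (A i j) (v j)) {1..n})"

definition mat_mult :: "nat \<Rightarrow> (nat \<Rightarrow> nat \<Rightarrow> lcf) \<Rightarrow> (nat \<Rightarrow> nat \<Rightarrow> lcf) \<Rightarrow> (nat \<Rightarrow> nat \<Rightarrow> lcf)" where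
  "mat_mult n A B = (\<lambda>i k. lc_sum (\<lambda>j. lc_mult (A i j) (B j k)) {1..n})"

definition mat_id :: "nat \<Rightarrow> nat \<Rightarrow> lcf" where
  "mat_id = (\<lambda>i k. if i = k then lc_one else lc_zero)"

definition mat_diag :: "(nat \<Rightarrow> lcf) \<Rightarrow> nat \<Rightarrow> nat \<Rightarrow> lcf" where
  "mat_diag d = (\<lambda>i k. if i = k then d i else lc_zero)"

definition mat_eq_on :: "nat \<Rightarrow> (nat \<Rightarrow> nat \<Rightarrow> lcf) \<Rightarrow> (nat \<Rightarrow> nat \<Rightarrow> lcf) \<Rightarrow> bool" where
  "mat_eq_on n A B \<longleftrightarrow> (\<forall>i\<in>{1..n}. \<forall>k\<in>{1..n}. A i k = B i k)"

definition is_LC_mat :: "nat \<Rightarrow> (nat \<Rightarrow> nat \<Rightarrow> lcf) \<Rightarrow> bool" where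
  "is_LC_mat n A \<longleftrightarrow> (\<forall>i\<in>{1..n}. \<forall>k\<in>{1..n}. is_LC (A i k))"

definition diagonalizable_with :: "nat \<Rightarrow> (nat \<Rightarrow> nat \<Rightarrow> lcf) \<Rightarrow> (nat \<Rightarrow> lcf) \<Rightarrow> bool" where
  "diagonalizable_with n A \<nu> \<longleftrightarrow>
     (\<exists>P Q. is_LC_mat n P \<and> is_LC_mat n Q \<and>
        mat_eq_on n (mat_mult n P Q) mat_id \<and> mat_eq_on n (mat_mult n Q P) mat_id \<and>
        mat_eq_on n A (mat_mult n (mat_mult n P (mat_diag \<nu>)) Q))"

end

theory Submission
  imports Defs
begin


lemma lf_subset: assumes "left_finite B" "A \<subseteq> B" shows "left_finite A"
  unfolding left_finite_def
proof
  fix r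
  have "{q \<in> A. q < r} \<subseteq> {q \<in> B. q < r}" using assms(2) by auto
  moreover have "finite {q \<in> B. q < r}" using assms(1) unfolding left_finite_def by blast
  ultimately show "finite {q \<in> A. q < r}" by (rule finite_subset)
qed

lemma lf_union: "left_finite A \<Longrightarrow> left_finite B \<Longrightarrow> left_finite (A \<union> B)"
  unfolding left_finite_def
proof
  fix r assume "\<forall>r. finite {q \<in> A. q < r}" "\<forall>r. finite {q \<in> B. q < r}"
  then have "finite ({q \<in> A. q < r} \<union> {q \<in> B. q < r})" by auto
  moreover have "{q \<in> A \<union> B. q < r} = {q \<in> A. q < r} \<union> {q \<in> B. q < r}" by auto
  ultimately show "finite {q \<in> A \<union> B. q < r}" by simp
qed

lemma lf_UN: "finite I \<Longrightarrow> (\<And>i. i \<in> I \<Longrightarrow> left_finite (A i)) \<Longrightarrow> left_finite (\<Union>i\<in>I. A i)"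
proof (induction I rule: finite_induct)
  case empty then show ?case by (simp add: left_finite_def)
next
  case (insert x F) then show ?case by (simp add: lf_union)
qed

lemma lf_min: assumes "left_finite A" "x \<in> A" shows "\<exists>m\<in>A. \<forall>y\<in>A. m \<le> y"
proof -
  let ?F = "{q \<in> A. q < x + 1}"
  have f: "finite ?F" using assms(1) unfolding left_finite_def by blast
  have x: "x \<in> ?F" using assms(2) by simp
  show ?thesis
  proof (intro bexI ballI)
    show "Min ?F \<in> A" using Min_in[OF f] x by blast
    fix y assume y: "y \<in> A"
    show "Min ?F \<le> y"
    proof (cases "y < x + 1")
      case True then show ?thesis using Min_le[OF f] y by simp
    next
      case False then show ?thesis using Min_le[OF f x] by simp
    qed
  qed
qed

lemma lam_eqI: "a p \<noteq> 0 \<Longrightarrow> (\<And>q. a q \<noteq> 0 \<Longrightarrow> p \<le> q) \<Longrightarrow> lam a = p"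
  unfolding lam_def by (rule Least_equality) auto

lemma lam_prop: assumes "is_LC a" "a \<noteq> lc_zero"
  shows "a (lam a) \<noteq> 0" "\<And>q. a q \<noteq> 0 \<Longrightarrow> lam a \<le> q"
proof -
  obtain x where x: "a x \<noteq> 0" using assms(2) unfolding lc_zero_def by auto
  obtain m where m: "m \<in> lsupp a" "\<forall>y\<in>lsupp a. m \<le> y"
    using lf_min[of "lsupp a" x] assms(1) x unfolding is_LC_def lsupp_def by auto
  have "lam a = m" using m by (intro lam_eqI) (auto simp: lsupp_def)
  then show "a (lam a) \<noteq> 0" "\<And>q. a q \<noteq> 0 \<Longrightarrow> lam a \<le> q" using m by (auto simp: lsupp_def)
qed

lemma finP: assumes "is_LC a" "is_LC b" shows "finite {p. a p \<noteq> 0 \<and> b (q - p) \<noteq> 0}"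
proof (cases "b = lc_zero")
  case True then show ?thesis by (simp add: lc_zero_def)
next
  case False
  have m: "\<And>t. b t \<noteq> 0 \<Longrightarrow> lam b \<le> t" using lam_prop[OF assms(2) False] by blast
  have "{p. a p \<noteq> 0 \<and> b (q - p) \<noteq> 0} \<subseteq> {p \<in> lsupp a. p < q - lam b + 1}"
    using m by (force simp: lsupp_def)
  moreover have "finite {p \<in> lsupp a. p < q - lam b + 1}"
    using assms(1) unfolding is_LC_def left_finite_def by blast
  ultimately show ?thesis by (rule finite_subset)
qed

lemma mult_eq_sum: assumes "finite S" "{p. a p \<noteq> 0 \<and> b (q - p) \<noteq> 0} \<subseteq> S"
  shows "lc_mult a b q = (\<Sum>p\<in>S. a p * b (q - p))"
  unfolding lc_mult_def using assms by (intro sum.mono_neutral_left) auto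

lemma supp_mult: "lc_mult a b q \<noteq> 0 \<Longrightarrow> \<exists>p. a p \<noteq> 0 \<and> b (q - p) \<noteq> 0"
  unfolding lc_mult_def by (metis (mono_tags, lifting) empty_Collect_eq sum.empty)

lemma mult_comm: "lc_mult a b = lc_mult b a"
proof
  fix q
  show "lc_mult a b q = lc_mult b a q" unfolding lc_mult_def
    by (rule sum.reindex_bij_witness[where i="\<lambda>p. q - p" and j="\<lambda>p. q - p"]) auto
qed

lemma mult_add_right: assumes "is_LC a" "is_LC b" "is_LC c"
  shows "lc_mult a (lc_add b c) = lc_add (lc_mult a b) (lc_mult a c)"
proof
  fix q
  let ?S = "{p. a p \<noteq> 0 \<and> b (q - p) \<noteq> 0} \<union> {p. a p \<noteq> 0 \<and> c (q - p) \<noteq> 0}"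
  have f: "finite ?S" using finP assms by blast
  have "lc_mult a (lc_add b c) q = (\<Sum>p\<in>?S. a p * lc_add b c (q - p))"
    by (rule mult_eq_sum[OF f]) (auto simp: lc_add_def)
  also have "\<dots> = (\<Sum>p\<in>?S. a p * b (q - p)) + (\<Sum>p\<in>?S. a p * c (q - p))"
    by (simp add: lc_add_def distrib_left sum.distrib)
  also have "\<dots> = lc_mult a b q + lc_mult a c q"
    using mult_eq_sum[OF f Un_upper1] mult_eq_sum[OF f Un_upper2] by simp
  finally show "lc_mult a (lc_add b c) q = lc_add (lc_mult a b) (lc_mult a c) q"
    by (simp add: lc_add_def)
qed

lemma mult_diff_right: assumes "is_LC a" "is_LC b" "is_LC c"
  shows "lc_mult a (lc_diff b c) = lc_diff (lc_mult a b) (lc_mult a c)"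
proof
  fix q
  let ?S = "{p. a p \<noteq> 0 \<and> b (q - p) \<noteq> 0} \<union> {p. a p \<noteq> 0 \<and> c (q - p) \<noteq> 0}"
  have f: "finite ?S" using finP assms by blast
  have "lc_mult a (lc_diff b c) q = (\<Sum>p\<in>?S. a p * lc_diff b c (q - p))"
    by (rule mult_eq_sum[OF f]) (auto simp: lc_diff_def)
  also have "\<dots> = (\<Sum>p\<in>?S. a p * b (q - p)) - (\<Sum>p\<in>?S. a p * c (q - p))"
    by (simp add: lc_diff_def right_diff_distrib sum_subtractf)
  also have "\<dots> = lc_mult a b q - lc_mult a c q"
    using mult_eq_sum[OF f Un_upper1] mult_eq_sum[OF f Un_upper2] by simp
  finally show "lc_mult a (lc_diff b c) q = lc_diff (lc_mult a b) (lc_mult a c) q"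
    by (simp add: lc_diff_def)
qed

lemma mult_low1: assumes "\<forall>p<l. a p = 0" "\<forall>p<m. b p = 0" "q < l + m"
  shows "lc_mult a b q = 0"
proof (rule ccontr)
  assume "lc_mult a b q \<noteq> 0"
  then obtain p where "a p \<noteq> 0" "b (q - p) \<noteq> 0" using supp_mult by blast
  have "l \<le> p" using assms(1) \<open>a p \<noteq> 0\<close> not_le by blast
  moreover have "m \<le> q - p" using assms(2) \<open>b (q - p) \<noteq> 0\<close> not_le by blast
  ultimately show False using assms(3) by simp
qed

lemma mult_low2: assumes "\<forall>p<l. a p = 0" "\<forall>p<m. b p = 0"
  shows "lc_mult a b (l + m) = a l * b m"
proof -
  have "{p. a p \<noteq> 0 \<and> b (l + m - p) \<noteq> 0} \<subseteq> {l}"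
  proof
    fix p assume "p \<in> {p. a p \<noteq> 0 \<and> b (l + m - p) \<noteq> 0}"
    then have h: "a p \<noteq> 0" "b (l + m - p) \<noteq> 0" by auto
    have "l \<le> p" using assms(1) h(1) not_le by blast
    moreover have "m \<le> l + m - p" using assms(2) h(2) not_le by blast
    ultimately show "p \<in> {l}" by simp
  qed
  from mult_eq_sum[OF _ this] have "lc_mult a b (l + m) = (\<Sum>p\<in>{l}. a p * b (l + m - p))" by simp
  then show ?thesis by simp
qed

lemma lc_is_zero: "(\<forall>q. a q = 0) \<Longrightarrow> a = lc_zero" by (auto simp: lc_zero_def)

lemma domain: assumes "is_LC a" "is_LC b" "lc_mult a b = lc_zero" shows "a = lc_zero \<or> b = lc_zero"
proof (rule ccontr)
  assume "\<not> (a = lc_zero \<or> b = lc_zero)"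
  then have na: "a \<noteq> lc_zero" and nb: "b \<noteq> lc_zero" by auto
  have "\<forall>p<lam a. a p = 0" using lam_prop(2)[OF assms(1) na] by (meson not_le)
  moreover have "\<forall>p<lam b. b p = 0" using lam_prop(2)[OF assms(2) nb] by (meson not_le)
  ultimately have "lc_mult a b (lam a + lam b) = a (lam a) * b (lam b)" by (rule mult_low2)
  also have "\<dots> \<noteq> 0" using lam_prop(1)[OF assms(1) na] lam_prop(1)[OF assms(2) nb] by simp
  finally show False using assms(3) by (simp add: lc_zero_def)
qed

lemma LC_add: "is_LC a \<Longrightarrow> is_LC b \<Longrightarrow> is_LC (lc_add a b)"
  unfolding is_LC_def by (erule lf_subset[OF lf_union], assumption) (auto simp: lsupp_def lc_add_def)
lemma LC_diff: "is_LC a \<Longrightarrow> is_LC b \<Longrightarrow> is_LC (lc_diff a b)"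
  unfolding is_LC_def by (erule lf_subset[OF lf_union], assumption) (auto simp: lsupp_def lc_diff_def)

lemma inv_unique: assumes "is_LC a" "is_LC b" "lc_mult a b = lc_one" shows "lc_inverse a = b"
  unfolding lc_inverse_def
proof (rule the_equality)
  show "is_LC b \<and> lc_mult a b = lc_one" using assms by simp
  fix c assume c: "is_LC c \<and> lc_mult a c = lc_one"
  have "lc_mult a (lc_diff c b) = lc_zero"
    using mult_diff_right[OF assms(1) _ assms(2), of c] c assms(3)
    by (simp add: lc_diff_def lc_zero_def)
  moreover have "a \<noteq> lc_zero"
  proof
    assume "a = lc_zero"
    then have "lc_mult a b 0 = 0" using supp_mult[of a b 0] by (auto simp: lc_zero_def)
    then show False using assms(3) by (simp add: lc_one_def)
  qed
  ultimately have "lc_diff c b = lc_zero" using domain[OF assms(1) LC_diff] c assms(2) by blast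
  then show "c = b" by (auto simp: lc_diff_def lc_zero_def fun_eq_iff)
qed

lemma lam_uminus: "lam (\<lambda>q. - a q) = lam a" unfolding lam_def by simp

lemma sqrt_unique: assumes "is_LR y" "lr_nonneg y" "lc_mult y y = a" shows "lr_sqrt a = y"
  unfolding lr_sqrt_def
proof (rule the_equality)
  show "is_LR y \<and> lr_nonneg y \<and> lc_mult y y = a" using assms by simp
  fix z assume z: "is_LR z \<and> lr_nonneg z \<and> lc_mult z z = a"
  have ly: "is_LC y" and lz: "is_LC z" using assms(1) z by (auto simp: is_LR_def)
  have "lc_mult (lc_diff z y) (lc_add z y) = lc_diff (lc_mult (lc_add z y) z) (lc_mult (lc_add z y) y)"
    using mult_diff_right[OF LC_add[OF lz ly] lz ly] by (simp add: mult_comm)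
  also have "\<dots> = lc_diff (lc_add (lc_mult z z) (lc_mult y z)) (lc_add (lc_mult z y) (lc_mult y y))"
    using mult_add_right[OF lz lz ly] mult_add_right[OF ly lz ly] by (simp add: mult_comm)
  also have "\<dots> = lc_zero" using z assms(3) by (simp add: lc_diff_def lc_add_def lc_zero_def fun_eq_iff mult_comm[of y z])
  finally have "lc_diff z y = lc_zero \<or> lc_add z y = lc_zero"
    using domain[OF LC_diff[OF lz ly] LC_add[OF lz ly]] by blast
  then show "z = y"
  proof
    assume "lc_diff z y = lc_zero" then show ?thesis by (auto simp: lc_diff_def lc_zero_def fun_eq_iff)
  next
    assume h: "lc_add z y = lc_zero"
    then have zy: "z = (\<lambda>q. - y q)" by (auto simp: lc_add_def lc_zero_def fun_eq_iff eq_neg_iff_add_eq_0)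
    show ?thesis
    proof (cases "y = lc_zero")
      case True then show ?thesis using zy by (simp add: lc_zero_def)
    next
      case False
      then have "z \<noteq> lc_zero" using zy by (auto simp: lc_zero_def fun_eq_iff)
      then have "Re (z (lam z)) > 0" using z by (auto simp: lr_nonneg_def lr_pos_def)
      moreover have "Re (y (lam y)) > 0" using assms(2) False by (auto simp: lr_nonneg_def lr_pos_def)
      ultimately show ?thesis using zy lam_uminus[of y] by simp
    qed
  qed
qed


section \<open>monoids\<close>

definition mon :: "rat set \<Rightarrow> rat set" where "mon S = {sum_list xs | xs. set xs \<subseteq> S}"

definition lfm :: "rat set \<Rightarrow> bool" where
  "lfm G \<longleftrightarrow> left_finite G \<and> 0 \<in> G \<and> (\<forall>x\<in>G. \<forall>y\<in>G. x + y \<in> G) \<and> (\<forall>x\<in>G. 0 \<le> x)"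

lemma len_le_sum: "(\<forall>x\<in>set xs. m \<le> x) \<Longrightarrow> of_nat (length xs) * m \<le> sum_list (xs::rat list)"
  by (induction xs) (auto simp: algebra_simps)

lemma sum_list_filter_nz: "sum_list (filter (\<lambda>x. x \<noteq> 0) xs) = sum_list (xs::rat list)"
  by (induction xs) auto

lemma mon_lf: assumes S: "left_finite S" "\<forall>x\<in>S. 0 \<le> x" shows "left_finite (mon S)"
  unfolding left_finite_def
proof
  fix r :: rat
  define F where "F = {x\<in>S. 0 < x \<and> x < r}"
  have "F \<subseteq> {q\<in>S. q < r}" unfolding F_def by auto
  then have fF: "finite F" using S(1) unfolding left_finite_def using finite_subset by blast
  define m where "m = (if F = {} then 1 else Min F)"
  have m0: "m > 0" using fF by (auto simp: m_def F_def)
  have mF: "\<forall>x\<in>F. m \<le> x" using fF by (auto simp: m_def)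
  define N where "N = nat \<lceil>r / m\<rceil>"
  have "{q \<in> mon S. q < r} \<subseteq> sum_list ` {xs. set xs \<subseteq> F \<and> length xs \<le> N}"
  proof
    fix q assume "q \<in> {q \<in> mon S. q < r}"
    then obtain xs where xs: "set xs \<subseteq> S" "q = sum_list xs" "q < r" by (auto simp: mon_def)
    define ys where "ys = filter (\<lambda>x. x \<noteq> 0) xs"
    have q: "q = sum_list ys" using xs sum_list_filter_nz unfolding ys_def by simp
    have nn: "\<And>x. x \<in> set xs \<Longrightarrow> 0 \<le> x" using xs(1) S(2) by auto
    have ysF: "set ys \<subseteq> F"
    proof
      fix x assume x: "x \<in> set ys"
      then have "x \<in> set xs" "x \<noteq> 0" by (auto simp: ys_def)
      moreover have "x \<le> sum_list xs" using member_le_sum_list[of x xs] nn \<open>x \<in> set xs\<close> by blast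
      ultimately show "x \<in> F" using xs nn unfolding F_def by force
    qed
    have "of_nat (length ys) * m \<le> q" using len_le_sum[of ys m] ysF mF q by auto
    then have "of_nat (length ys) * m < r" using xs(3) by simp
    then have "of_nat (length ys) < r / m" using m0 by (simp add: field_simps)
    then have "length ys \<le> N" unfolding N_def by linarith
    then show "q \<in> sum_list ` {xs. set xs \<subseteq> F \<and> length xs \<le> N}" using q ysF by auto
  qed
  moreover have "finite (sum_list ` {xs. set xs \<subseteq> F \<and> length xs \<le> N})"
    using finite_lists_length_le[OF fF] by blast
  ultimately show "finite {q \<in> mon S. q < r}" by (rule finite_subset)
qed

lemma mon_lfm: assumes "left_finite S" "\<forall>x\<in>S. 0 \<le> x" shows "lfm (mon S)"
  unfolding lfm_def
proof (intro conjI ballI)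
  show "left_finite (mon S)" using mon_lf assms by blast
  show "0 \<in> mon S" unfolding mon_def by (auto intro: exI[of _ "[]"])
  fix x y assume "x \<in> mon S" "y \<in> mon S"
  then obtain xs ys where "set xs \<subseteq> S" "x = sum_list xs" "set ys \<subseteq> S" "y = sum_list ys"
    by (auto simp: mon_def)
  then show "x + y \<in> mon S" unfolding mon_def by (auto intro!: exI[of _ "xs @ ys"])
next
  fix x assume "x \<in> mon S"
  then obtain xs where "set xs \<subseteq> S" "x = sum_list xs" by (auto simp: mon_def)
  then show "0 \<le> x" using assms(2) by (auto intro!: sum_list_nonneg)
qed

lemma mon_sub: "S \<subseteq> mon S"
  unfolding mon_def by (auto intro!: exI[of _ "[x]" for x])

section \<open>elements supported in G\<close>

definition inG :: "rat set \<Rightarrow> lcf \<Rightarrow> bool" where "inG G a \<longleftrightarrow> lsupp a \<subseteq> G"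

lemma inG_LC: "lfm G \<Longrightarrow> inG G a \<Longrightarrow> is_LC a"
  unfolding lfm_def inG_def is_LC_def using lf_subset by blast

lemma inG_amf: "lfm G \<Longrightarrow> inG G a \<Longrightarrow> at_most_finite a"
  unfolding lfm_def inG_def at_most_finite_def lsupp_def by auto

lemma inG_out: "inG G a \<Longrightarrow> q \<notin> G \<Longrightarrow> a q = 0"
  unfolding inG_def lsupp_def by auto

definition TT :: "rat set \<Rightarrow> rat \<Rightarrow> rat set" where "TT G q = {p \<in> G. p \<le> q \<and> q - p \<in> G}"

lemma TT_fin: "lfm G \<Longrightarrow> finite (TT G q)"
  unfolding lfm_def left_finite_def TT_def by (rule finite_subset[of _ "{p \<in> G. p < q + 1}"]) auto

lemma mult_TT: assumes "lfm G" "inG G a" "inG G b"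
  shows "lc_mult a b q = (\<Sum>p\<in>TT G q. a p * b (q - p))"
proof (rule mult_eq_sum[OF TT_fin[OF assms(1)]])
  show "{p. a p \<noteq> 0 \<and> b (q - p) \<noteq> 0} \<subseteq> TT G q"
  proof
    fix p assume "p \<in> {p. a p \<noteq> 0 \<and> b (q - p) \<noteq> 0}"
    then have "p \<in> G" "q - p \<in> G" using assms(2,3) by (auto simp: inG_def lsupp_def)
    then show "p \<in> TT G q" using assms(1) unfolding TT_def lfm_def by fastforce
  qed
qed

lemma TT_out: assumes "lfm G" "q \<notin> G" shows "TT G q = {}"
proof -
  have "\<And>p. p \<in> G \<Longrightarrow> q - p \<in> G \<Longrightarrow> False"
  proof -
    fix p assume "p \<in> G" "q - p \<in> G"
    then have "p + (q - p) \<in> G" using assms(1) unfolding lfm_def by blast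
    then show False using assms(2) by simp
  qed
  then show ?thesis unfolding TT_def by blast
qed

lemma TT_0: "lfm G \<Longrightarrow> TT G 0 = {0}"
  unfolding lfm_def TT_def by force

lemma TT_split: assumes "lfm G" "q \<in> G" "q \<noteq> 0"
  shows "TT G q = insert 0 {p \<in> G. 0 < p \<and> p \<le> q \<and> q - p \<in> G}" "0 \<notin> {p \<in> G. 0 < p \<and> p \<le> q \<and> q - p \<in> G}"
  using assms unfolding lfm_def TT_def by force+

lemma TT_split2: assumes "lfm G" "q \<in> G" "q \<noteq> 0"
  shows "TT G q = insert 0 (insert q {p \<in> G. 0 < p \<and> p < q \<and> q - p \<in> G})"
    "0 \<notin> insert q {p \<in> G. 0 < p \<and> p < q \<and> q - p \<in> G}" "q \<notin> {p \<in> G. 0 < p \<and> p < q \<and> q - p \<in> G}"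
  using assms unfolding lfm_def TT_def by force+

lemma inG_mult: assumes "lfm G" "inG G a" "inG G b" shows "inG G (lc_mult a b)"
  unfolding inG_def lsupp_def
proof
  fix q assume "q \<in> {q. lc_mult a b q \<noteq> 0}"
  then obtain p where "a p \<noteq> 0" "b (q - p) \<noteq> 0" using supp_mult by blast
  then have "p \<in> G" "q - p \<in> G" using assms(2,3) by (auto simp: inG_def lsupp_def)
  then show "q \<in> G" using assms(1) unfolding lfm_def by (metis diff_add_cancel add.commute)
qed

lemma inG_add: "inG G a \<Longrightarrow> inG G b \<Longrightarrow> inG G (lc_add a b)"
  unfolding inG_def lsupp_def lc_add_def
proof (rule subsetI)
  fix x assume "{q. a q \<noteq> 0} \<subseteq> G" "{q. b q \<noteq> 0} \<subseteq> G" "x \<in> {q. a q + b q \<noteq> 0}"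
  moreover have "a x + b x \<noteq> 0 \<Longrightarrow> a x \<noteq> 0 \<or> b x \<noteq> 0" by auto
  ultimately show "x \<in> G" by blast
qed
lemma inG_diff: "inG G a \<Longrightarrow> inG G b \<Longrightarrow> inG G (lc_diff a b)"
  unfolding inG_def lsupp_def lc_diff_def
proof (rule subsetI)
  fix x assume "{q. a q \<noteq> 0} \<subseteq> G" "{q. b q \<noteq> 0} \<subseteq> G" "x \<in> {q. a q - b q \<noteq> 0}"
  moreover have "a x - b x \<noteq> 0 \<Longrightarrow> a x \<noteq> 0 \<or> b x \<noteq> 0" by auto
  ultimately show "x \<in> G" by blast
qed
lemma inG_re: "inG G a \<Longrightarrow> inG G (lc_re a)"
  unfolding inG_def lsupp_def lc_re_def by auto
lemma inG_im: "inG G a \<Longrightarrow> inG G (lc_im a)"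
  unfolding inG_def lsupp_def lc_im_def by auto
lemma inG_zero: "inG G lc_zero" unfolding inG_def lsupp_def lc_zero_def by auto
lemma inG_one: "lfm G \<Longrightarrow> inG G lc_one" unfolding inG_def lsupp_def lc_one_def lfm_def by auto
lemma inG_sum: "(\<And>i. i \<in> I \<Longrightarrow> inG G (f i)) \<Longrightarrow> inG G (lc_sum f I)"
proof -
  assume h: "\<And>i. i \<in> I \<Longrightarrow> inG G (f i)"
  show ?thesis unfolding inG_def lsupp_def lc_sum_def
  proof
    fix q assume "q \<in> {q. (\<Sum>i\<in>I. f i q) \<noteq> 0}"
    then obtain i where "i \<in> I" "f i q \<noteq> 0" by (metis (mono_tags, lifting) mem_Collect_eq sum.neutral)
    then show "q \<in> G" using h by (auto simp: inG_def lsupp_def)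
  qed
qed
lemma inG_pow: "lfm G \<Longrightarrow> inG G a \<Longrightarrow> inG G (lc_pow a k)"
  by (induction k) (auto simp: lc_pow_def inG_one inG_mult)

lemma pow_Suc: "lc_pow a (Suc k) = lc_mult a (lc_pow a k)"
  by (simp add: lc_pow_def)


section \<open>recursive inverse and square root\<close>

lemma rk_less: assumes "lfm G" "p \<in> G" "p < q" shows "card {x \<in> G. x < p} < card {x \<in> G. x < q}"
proof (rule psubset_card_mono)
  show "finite {x \<in> G. x < q}" using assms(1) unfolding lfm_def left_finite_def by blast
  show "{x \<in> G. x < p} \<subset> {x \<in> G. x < q}" using assms by auto
qed

function invc :: "rat set \<Rightarrow> lcf \<Rightarrow> rat \<Rightarrow> complex" where
  "invc G a q = (if lfm G \<and> q \<in> G then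
     (if q = 0 then 1 / a 0 else
        - (\<Sum>p\<in>{p\<in>G. 0 < p \<and> p \<le> q \<and> q - p \<in> G}. a p * invc G a (q - p)) / a 0)
   else 0)"
  by pat_completeness auto
termination
  by (relation "measure (\<lambda>(G,a,q). card {p\<in>G. p < q})") (auto intro!: rk_less)

function sqrtr :: "rat set \<Rightarrow> lcf \<Rightarrow> rat \<Rightarrow> real" where
  "sqrtr G a q = (if lfm G \<and> q \<in> G then
     (if q = 0 then sqrt (Re (a 0)) else
        (Re (a q) - (\<Sum>p\<in>{p\<in>G. 0 < p \<and> p < q \<and> q - p \<in> G}. sqrtr G a p * sqrtr G a (q - p)))
          / (2 * sqrtr G a 0))
   else 0)"
  by pat_completeness auto
termination
proof (relation "measure (\<lambda>(G,a,q). card {p\<in>G. p < q})")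
  show "wf (measure (\<lambda>(G,a,q). card {p\<in>G. p < q}))" by simp
next
  fix G a q p assume "lfm G \<and> q \<in> G" "q \<noteq> 0" "p \<in> {p\<in>G. 0 < p \<and> p < q \<and> q - p \<in> G}"
  then show "((G, a, p), G, a, q) \<in> measure (\<lambda>(G,a,q). card {p\<in>G. p < q})"
    by (auto intro!: rk_less)
next
  fix G a q p assume "lfm G \<and> q \<in> G" "q \<noteq> 0" "p \<in> {p\<in>G. 0 < p \<and> p < q \<and> q - p \<in> G}"
  then show "((G, a, q - p), G, a, q) \<in> measure (\<lambda>(G,a,q). card {p\<in>G. p < q})"
    by (auto intro!: rk_less)
next
  fix G a q assume h: "lfm G \<and> q \<in> G" "q \<noteq> 0"
  then have "0 \<in> G" "0 < q" unfolding lfm_def by (auto simp: order_le_less)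
  then show "((G, a, 0), G, a, q) \<in> measure (\<lambda>(G,a,q). card {p\<in>G. p < q})"
    using h by (auto intro!: rk_less)
qed

declare invc.simps [simp del] sqrtr.simps [simp del]

definition inv_lc :: "rat set \<Rightarrow> lcf \<Rightarrow> lcf" where "inv_lc G a = (\<lambda>q. invc G a q)"
definition sq_lc :: "rat set \<Rightarrow> lcf \<Rightarrow> lcf" where "sq_lc G a = (\<lambda>q. complex_of_real (sqrtr G a q))"

lemma invc_out: "q \<notin> G \<Longrightarrow> invc G a q = 0" by (subst invc.simps) simp
lemma sqrtr_out: "q \<notin> G \<Longrightarrow> sqrtr G a q = 0" by (subst sqrtr.simps) simp
lemma invc_0: "lfm G \<Longrightarrow> invc G a 0 = 1 / a 0"
  by (subst invc.simps) (simp add: lfm_def)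
lemma sqrtr_0: "lfm G \<Longrightarrow> sqrtr G a 0 = sqrt (Re (a 0))"
  by (subst sqrtr.simps) (simp add: lfm_def)
lemma invc_q: "lfm G \<Longrightarrow> q \<in> G \<Longrightarrow> q \<noteq> 0 \<Longrightarrow> invc G a q =
   - (\<Sum>p\<in>{p\<in>G. 0 < p \<and> p \<le> q \<and> q - p \<in> G}. a p * invc G a (q - p)) / a 0"
  by (subst invc.simps) simp
lemma sqrtr_q: "lfm G \<Longrightarrow> q \<in> G \<Longrightarrow> q \<noteq> 0 \<Longrightarrow> sqrtr G a q =
   (Re (a q) - (\<Sum>p\<in>{p\<in>G. 0 < p \<and> p < q \<and> q - p \<in> G}. sqrtr G a p * sqrtr G a (q - p)))
          / (2 * sqrtr G a 0)"
  by (subst sqrtr.simps) simp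

lemma inG_inv_lc: "inG G (inv_lc G a)"
  unfolding inG_def lsupp_def inv_lc_def using invc_out by blast
lemma inG_sq_lc: "inG G (sq_lc G a)"
  unfolding inG_def lsupp_def sq_lc_def using sqrtr_out by fastforce

lemma inv_prod: assumes G: "lfm G" and a: "inG G a" "a 0 \<noteq> 0"
  shows "lc_mult a (inv_lc G a) = lc_one"
proof
  fix q
  have eq: "lc_mult a (inv_lc G a) q = (\<Sum>p\<in>TT G q. a p * invc G a (q - p))"
    using mult_TT[OF G a(1) inG_inv_lc] by (simp add: inv_lc_def)
  have G0: "0 \<in> G" using G by (simp add: lfm_def)
  show "lc_mult a (inv_lc G a) q = lc_one q"
  proof (cases "q \<in> G")
    case False
    then show ?thesis using eq TT_out[OF G False] G0 by (auto simp: lc_one_def)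
  next
    case qG: True
    show ?thesis
    proof (cases "q = 0")
      case True
      then show ?thesis using eq TT_0[OF G] invc_0[OF G] a(2) by (simp add: lc_one_def)
    next
      case False
      let ?M = "{p\<in>G. 0 < p \<and> p \<le> q \<and> q - p \<in> G}"
      have fM: "finite ?M" using TT_fin[OF G, of q] TT_split(1)[OF G qG False] by simp
      have "lc_mult a (inv_lc G a) q = a 0 * invc G a q + (\<Sum>p\<in>?M. a p * invc G a (q - p))"
        using eq TT_split[OF G qG False] fM by simp
      also have "\<dots> = 0" using invc_q[OF G qG False, of a] a(2) by simp
      finally show ?thesis using False by (simp add: lc_one_def)
    qed
  qed
qed

lemma sqrt_prod: assumes G: "lfm G" and a: "inG G a" "Re (a 0) > 0" "\<And>q. Im (a q) = 0"
  shows "lc_mult (sq_lc G a) (sq_lc G a) = a"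
proof
  fix q
  have eq: "lc_mult (sq_lc G a) (sq_lc G a) q = of_real (\<Sum>p\<in>TT G q. sqrtr G a p * sqrtr G a (q - p))"
    using mult_TT[OF G inG_sq_lc inG_sq_lc] by (simp add: sq_lc_def)
  have aq: "a q = of_real (Re (a q))" using a(3) by (simp add: complex_eq_iff)
  have s0: "sqrtr G a 0 > 0" using sqrtr_0[OF G] a(2) by simp
  show "lc_mult (sq_lc G a) (sq_lc G a) q = a q"
  proof (cases "q \<in> G")
    case False
    then show ?thesis using eq TT_out[OF G False] inG_out[OF a(1) False] by simp
  next
    case qG: True
    show ?thesis
    proof (cases "q = 0")
      case True
      then show ?thesis using eq TT_0[OF G] sqrtr_0[OF G, of a] a(2) aq
        by (simp flip: of_real_mult)
    next
      case False
      let ?M = "{p\<in>G. 0 < p \<and> p < q \<and> q - p \<in> G}"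
      have fM: "finite ?M" using TT_fin[OF G, of q] TT_split2(1)[OF G qG False] by simp
      have "(\<Sum>p\<in>TT G q. sqrtr G a p * sqrtr G a (q - p))
          = sqrtr G a 0 * sqrtr G a q + (sqrtr G a q * sqrtr G a 0 + (\<Sum>p\<in>?M. sqrtr G a p * sqrtr G a (q - p)))"
        using TT_split2[OF G qG False] fM by simp
      also have "\<dots> = Re (a q)" using sqrtr_q[OF G qG False, of a] s0 by (simp add: field_simps)
      finally show ?thesis using eq aq by simp
    qed
  qed
qed

lemma inv_tend: assumes G: "lfm G" and t: "\<And>q. (\<lambda>k. a k q) \<longlonglongrightarrow> b q" and b0: "b 0 \<noteq> 0"
  shows "(\<lambda>k. invc G (a k) q) \<longlonglongrightarrow> invc G b q"
proof (induction "card {p\<in>G. p < q}" arbitrary: q rule: less_induct)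
  case less
  show ?case
  proof (cases "q \<in> G")
    case False then show ?thesis using invc_out[OF False] by simp
  next
    case qG: True
    show ?thesis
    proof (cases "q = 0")
      case True
      then show ?thesis using invc_0[OF G] tendsto_divide[OF tendsto_const t b0, of 1] by simp
    next
      case False
      have IH: "\<And>p. p \<in> {p\<in>G. 0 < p \<and> p \<le> q \<and> q - p \<in> G} \<Longrightarrow>
           (\<lambda>k. invc G (a k) (q - p)) \<longlonglongrightarrow> invc G b (q - p)"
        using less rk_less[OF G] by auto
      have "(\<lambda>k. - (\<Sum>p\<in>{p\<in>G. 0 < p \<and> p \<le> q \<and> q - p \<in> G}. a k p * invc G (a k) (q - p)) / a k 0)
         \<longlonglongrightarrow> - (\<Sum>p\<in>{p\<in>G. 0 < p \<and> p \<le> q \<and> q - p \<in> G}. b p * invc G b (q - p)) / b 0"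
        by (intro tendsto_intros t IH b0)
      then show ?thesis using invc_q[OF G qG False] by simp
    qed
  qed
qed

lemma sqrt_tend: assumes G: "lfm G" and t: "\<And>q. (\<lambda>k. a k q) \<longlonglongrightarrow> b q" and b0: "Re (b 0) > 0"
  shows "(\<lambda>k. sqrtr G (a k) q) \<longlonglongrightarrow> sqrtr G b q"
proof (induction "card {p\<in>G. p < q}" arbitrary: q rule: less_induct)
  case less
  have T0: "(\<lambda>k. sqrtr G (a k) 0) \<longlonglongrightarrow> sqrtr G b 0"
    using sqrtr_0[OF G] tendsto_real_sqrt[OF tendsto_Re[OF t]] by simp
  have nz: "2 * sqrtr G b 0 \<noteq> 0" using sqrtr_0[OF G] b0 by simp
  show ?case
  proof (cases "q \<in> G")
    case False then show ?thesis using sqrtr_out[OF False] by simp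
  next
    case qG: True
    show ?thesis
    proof (cases "q = 0")
      case True
      then show ?thesis using T0 by simp
    next
      case False
      have IH: "\<And>p. p \<in> {p\<in>G. 0 < p \<and> p < q \<and> q - p \<in> G} \<Longrightarrow>
           (\<lambda>k. sqrtr G (a k) (q - p)) \<longlonglongrightarrow> sqrtr G b (q - p)"
           "\<And>p. p \<in> {p\<in>G. 0 < p \<and> p < q \<and> q - p \<in> G} \<Longrightarrow>
           (\<lambda>k. sqrtr G (a k) p) \<longlonglongrightarrow> sqrtr G b p"
        using less rk_less[OF G] by auto
      have "(\<lambda>k. (Re (a k q) - (\<Sum>p\<in>{p\<in>G. 0 < p \<and> p < q \<and> q - p \<in> G}. sqrtr G (a k) p * sqrtr G (a k) (q - p)))
          / (2 * sqrtr G (a k) 0))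
         \<longlonglongrightarrow> (Re (b q) - (\<Sum>p\<in>{p\<in>G. 0 < p \<and> p < q \<and> q - p \<in> G}. sqrtr G b p * sqrtr G b (q - p)))
          / (2 * sqrtr G b 0)"
        by (intro tendsto_intros t IH T0 nz)
      then show ?thesis using sqrtr_q[OF G qG False] by simp
    qed
  qed
qed


section \<open>convergence tools\<close>

lemma wk_reduce: assumes G: "lfm G" and ev: "eventually (\<lambda>k. inG G (s k)) sequentially"
  and aG: "inG G a" and t: "\<And>q. (\<lambda>k. s k q) \<longlonglongrightarrow> a q"
  shows "wk_conv s a"
  unfolding wk_conv_def
proof (intro allI impI)
  fix r :: real assume r: "r > 0"
  obtain N :: nat where N: "1 / r < of_nat N" using reals_Archimedean2 by blast
  define F where "F = {q \<in> G. q < of_nat N}"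
  have fF: "finite F" using G unfolding F_def lfm_def left_finite_def by blast
  have "\<forall>q\<in>F. eventually (\<lambda>k. cmod (s k q - a q) < r) sequentially"
    using t r unfolding tendsto_iff dist_norm by blast
  then have "eventually (\<lambda>k. \<forall>q\<in>F. cmod (s k q - a q) < r) sequentially"
    by (rule eventually_ball_finite[OF fF])
  then have "eventually (\<lambda>k. inG G (s k) \<and> (\<forall>q\<in>F. cmod (s k q - a q) < r)) sequentially"
    by (rule eventually_conj[OF ev])
  then obtain N0 where N0: "\<forall>k\<ge>N0. inG G (s k) \<and> (\<forall>q\<in>F. cmod (s k q - a q) < r)"
    unfolding eventually_sequentially by (elim exE) (rule that)
  show "\<exists>N0. \<forall>m>N0. lc_seminorm (1 / r) (lc_diff (s m) a) < r"
  proof (intro exI allI impI)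
    fix m assume "m > N0"
    then have m: "inG G (s m)" "\<forall>q\<in>F. cmod (s m q - a q) < r" using N0 by auto
    define X where "X = {cmod (lc_diff (s m) a q) | q. real_of_rat q \<le> 1 / r}"
    have XS: "X \<subseteq> insert 0 ((\<lambda>q. cmod (s m q - a q)) ` F)"
    proof
      fix x assume "x \<in> X"
      then obtain q where q: "x = cmod (s m q - a q)" "real_of_rat q \<le> 1 / r"
        unfolding X_def lc_diff_def by auto
      show "x \<in> insert 0 ((\<lambda>q. cmod (s m q - a q)) ` F)"
      proof (cases "q \<in> G")
        case True
        have "real_of_rat q < real_of_rat (of_nat N)" using q(2) N by simp
        then have "q < of_nat N" using of_rat_less by blast
        then show ?thesis using True q unfolding F_def by auto
      next
        case False
        then show ?thesis using q inG_out[OF m(1) False] inG_out[OF aG False] by simp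
      qed
    qed
    have fX: "finite X" by (rule finite_subset[OF XS]) (use fF in simp)
    have "cmod (lc_diff (s m) a 0) \<in> X" unfolding X_def using r by auto
    then have neX: "X \<noteq> {}" by blast
    have "Sup X = Max X" using cSup_eq_Max[OF fX neX] .
    moreover have "Max X \<in> insert 0 ((\<lambda>q. cmod (s m q - a q)) ` F)" using Max_in[OF fX neX] XS by blast
    then have "Max X < r"
    proof
      assume "Max X = 0" then show ?thesis using r by simp
    next
      assume "Max X \<in> (\<lambda>q. cmod (s m q - a q)) ` F"
      then obtain q where "q \<in> F" "Max X = cmod (s m q - a q)" by blast
      then show ?thesis using m(2) by simp
    qed
    ultimately show "lc_seminorm (1 / r) (lc_diff (s m) a) < r"
      unfolding lc_seminorm_def X_def by simp
  qed
qed

lemma mult_tend: assumes G: "lfm G" and aG: "\<And>k. inG G (a k)" "inG G A"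
  and bG: "\<And>k. inG G (b k)" "inG G B"
  and ta: "\<And>q. (\<lambda>k. a k q) \<longlonglongrightarrow> A q" and tb: "\<And>q. (\<lambda>k. b k q) \<longlonglongrightarrow> B q"
  shows "(\<lambda>k. lc_mult (a k) (b k) q) \<longlonglongrightarrow> lc_mult A B q"
proof -
  have "(\<lambda>k. \<Sum>p\<in>TT G q. a k p * b k (q - p)) \<longlonglongrightarrow> (\<Sum>p\<in>TT G q. A p * B (q - p))"
    by (intro tendsto_intros ta tb)
  then show ?thesis using mult_TT[OF G aG(1) bG(1)] mult_TT[OF G aG(2) bG(2)] by simp
qed

lemma recur_zero: fixes e f :: "nat \<Rightarrow> complex"
  assumes c: "cmod c < 1" and rec: "\<And>k. e (Suc k) = c * e k + f k" and f: "f \<longlonglongrightarrow> 0"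
  shows "e \<longlonglongrightarrow> 0"
proof (rule LIMSEQ_I)
  fix \<epsilon> :: real assume \<epsilon>: "\<epsilon> > 0"
  define \<delta> where "\<delta> = \<epsilon> * (1 - cmod c) / 2"
  have \<delta>: "\<delta> > 0" using \<epsilon> c by (simp add: \<delta>_def)
  obtain K where K: "\<And>k. k \<ge> K \<Longrightarrow> cmod (f k) < \<delta>" using LIMSEQ_D[OF f \<delta>] by auto
  have bound: "cmod (e (K + j)) \<le> cmod c ^ j * cmod (e K) + \<epsilon> / 2" for j
  proof (induction j)
    case 0 then show ?case using \<epsilon> by simp
  next
    case (Suc j)
    have "cmod (e (K + Suc j)) \<le> cmod c * cmod (e (K + j)) + cmod (f (K + j))"
      using rec[of "K + j"] norm_triangle_ineq[of "c * e (K + j)" "f (K + j)"] by (simp add: norm_mult)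
    also have "\<dots> \<le> cmod c * (cmod c ^ j * cmod (e K) + \<epsilon> / 2) + \<delta>"
      using Suc K[of "K + j"] by (intro add_mono mult_left_mono) auto
    also have "\<dots> = cmod c ^ Suc j * cmod (e K) + \<epsilon> / 2"
      by (simp add: \<delta>_def field_simps)
    finally show ?case .
  qed
  have "(\<lambda>j. cmod c ^ j * cmod (e K)) \<longlonglongrightarrow> 0"
    by (intro tendsto_mult_left_zero LIMSEQ_power_zero) (use c in simp)
  from LIMSEQ_D[OF this, of "\<epsilon>/2"] \<epsilon> obtain J where
    J0: "\<forall>j\<ge>J. norm (cmod c ^ j * cmod (e K) - 0) < \<epsilon> / 2" by auto
  have J: "\<And>j. j \<ge> J \<Longrightarrow> norm (cmod c ^ j * cmod (e K)) < \<epsilon> / 2" using J0 by simp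
  show "\<exists>no. \<forall>n\<ge>no. norm (e n - 0) < \<epsilon>"
  proof (intro exI allI impI)
    fix n assume n: "n \<ge> K + J"
    define j where "j = n - K"
    have j: "n = K + j" "j \<ge> J" using n unfolding j_def by auto
    have "cmod (e n) \<le> cmod c ^ j * cmod (e K) + \<epsilon> / 2" using bound j by simp
    also have "\<dots> < \<epsilon>" using J[OF j(2)] by simp
    finally show "norm (e n - 0) < \<epsilon>" by simp
  qed
qed

lemma TT_split': assumes "lfm G" "q \<in> G"
  shows "TT G q = insert 0 {p \<in> G. 0 < p \<and> p \<le> q \<and> q - p \<in> G}" "0 \<notin> {p \<in> G. 0 < p \<and> p \<le> q \<and> q - p \<in> G}"
proof -
  show "0 \<notin> {p \<in> G. 0 < p \<and> p \<le> q \<and> q - p \<in> G}" by simp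
  show "TT G q = insert 0 {p \<in> G. 0 < p \<and> p \<le> q \<and> q - p \<in> G}"
  proof (cases "q = 0")
    case True
    have e: "{p \<in> G. 0 < p \<and> p \<le> q \<and> q - p \<in> G} = {}" using True by auto
    have t: "TT G q = {0}" using TT_0[OF assms(1)] True by simp
    show ?thesis by (simp only: e t)
  next
    case False then show ?thesis using TT_split(1)[OF assms False] by simp
  qed
qed

lemma pow_tend: assumes G: "lfm G" and u: "inG G u" "cmod (u 0) < 1"
  shows "(\<lambda>k. lc_pow u k q) \<longlonglongrightarrow> 0"
proof (induction "card {p\<in>G. p < q}" arbitrary: q rule: less_induct)
  case less
  show ?case
  proof (cases "q \<in> G")
    case False then show ?thesis using inG_out[OF inG_pow[OF G u(1)] False] by simp
  next
    case qG: True
    let ?M = "{p\<in>G. 0 < p \<and> p \<le> q \<and> q - p \<in> G}"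
    have fM: "finite ?M" using TT_fin[OF G, of q] TT_split'(1)[OF G qG] by simp
    have rec: "lc_pow u (Suc k) q = u 0 * lc_pow u k q + (\<Sum>p\<in>?M. u p * lc_pow u k (q - p))" for k
      using mult_TT[OF G u(1) inG_pow[OF G u(1)], of k q] TT_split'[OF G qG] fM by (simp add: pow_Suc)
    have IH: "\<And>p. p \<in> ?M \<Longrightarrow> (\<lambda>k. lc_pow u k (q - p)) \<longlonglongrightarrow> 0"
      using less rk_less[OF G] by auto
    have "(\<lambda>k. \<Sum>p\<in>?M. u p * lc_pow u k (q - p)) \<longlonglongrightarrow> 0"
      by (intro tendsto_null_sum tendsto_mult_right_zero IH)
    then show ?thesis
      by (rule recur_zero[where e="\<lambda>k. lc_pow u k q" and f="\<lambda>k. \<Sum>p\<in>?M. u p * lc_pow u k (q - p)", OF u(2) rec])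
  qed
qed


section \<open>general square roots\<close>

lemma lam0: "at_most_finite a \<Longrightarrow> a 0 \<noteq> 0 \<Longrightarrow> lam a = 0"
  by (rule lam_eqI) (auto simp: at_most_finite_def)

lemma real_mult: assumes "\<And>q. Im (a q) = 0" "\<And>q. Im (b q) = 0" shows "Im (lc_mult a b q) = 0"
  unfolding lc_mult_def Im_sum using assms by simp

definition shift :: "lcf \<Rightarrow> rat \<Rightarrow> lcf" where "shift a s = (\<lambda>q. a (q - s))"

lemma shift_mult: "lc_mult (shift f s) (shift g t) = shift (lc_mult f g) (s + t)"
proof
  fix q
  show "lc_mult (shift f s) (shift g t) q = shift (lc_mult f g) (s + t) q"
    unfolding lc_mult_def shift_def
    by (rule sum.reindex_bij_witness[where i="\<lambda>p. p + s" and j="\<lambda>p. p - s"]) (auto simp: algebra_simps)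
qed

lemma shift_LC: assumes "is_LC a" shows "is_LC (shift a s)"
  unfolding is_LC_def left_finite_def
proof
  fix r
  have "{q \<in> lsupp (shift a s). q < r} = (\<lambda>q. q + s) ` {q \<in> lsupp a. q < r - s}"
    unfolding lsupp_def shift_def by (auto simp: image_iff intro!: exI[of _ "x - s" for x])
  then show "finite {q \<in> lsupp (shift a s). q < r}"
    using assms unfolding is_LC_def left_finite_def by simp
qed

lemma sq_lc_is_sqrt: assumes G: "lfm G" and a: "inG G a" "Re (a 0) > 0" "\<And>q. Im (a q) = 0"
  shows "lr_sqrt a = sq_lc G a"
proof (rule sqrt_unique)
  show "is_LR (sq_lc G a)" unfolding is_LR_def using inG_LC[OF G inG_sq_lc] by (simp add: sq_lc_def)
  have v0: "sq_lc G a 0 = of_real (sqrt (Re (a 0)))" by (simp add: sq_lc_def sqrtr_0[OF G])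
  then have "sq_lc G a 0 \<noteq> 0" using a(2) by simp
  then have l: "lam (sq_lc G a) = 0" using lam0 inG_amf[OF G inG_sq_lc] by blast
  show "lr_nonneg (sq_lc G a)" unfolding lr_nonneg_def lr_pos_def
    using l v0 a(2) \<open>sq_lc G a 0 \<noteq> 0\<close> by (auto simp: lc_zero_def)
  show "lc_mult (sq_lc G a) (sq_lc G a) = a" by (rule sqrt_prod[OF G a])
qed

lemma zero_sq: "lc_mult lc_zero lc_zero = lc_zero"
  by (rule ext) (simp add: lc_mult_def lc_zero_def)

lemma sqrt_gen: assumes b: "is_LR b" "at_most_finite b" "lr_nonneg b"
  shows "is_LR (lr_sqrt b) \<and> at_most_finite (lr_sqrt b) \<and> lc_mult (lr_sqrt b) (lr_sqrt b) = b
     \<and> lr_sqrt b 0 = of_real (sqrt (Re (b 0)))"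
proof (cases "b = lc_zero")
  case True
  have "lr_sqrt b = lc_zero"
  proof (rule sqrt_unique)
    show "lc_mult lc_zero lc_zero = b" using True zero_sq by simp
  qed (auto simp: is_LR_def is_LC_def lsupp_def lc_zero_def left_finite_def lr_nonneg_def)
  then show ?thesis using True zero_sq
    by (auto simp: is_LR_def is_LC_def lsupp_def lc_zero_def left_finite_def at_most_finite_def)
next
  case False
  have bLC: "is_LC b" and bre: "\<And>q. Im (b q) = 0" using b(1) by (auto simp: is_LR_def)
  define l where "l = lam b"
  have bl: "b l \<noteq> 0" "\<And>q. b q \<noteq> 0 \<Longrightarrow> l \<le> q" using lam_prop[OF bLC False] l_def by auto
  have l0: "0 \<le> l" using bl(1) b(2) by (auto simp: at_most_finite_def)
  have blpos: "Re (b l) > 0" using b(3) False by (auto simp: lr_nonneg_def lr_pos_def l_def)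
  define c where "c = shift b (- l)"
  have cLC: "is_LC c" using shift_LC[OF bLC] by (simp add: c_def)
  have cnn: "\<forall>x\<in>lsupp c. 0 \<le> x" using bl(2) by (force simp: c_def shift_def lsupp_def)
  define G where "G = mon (lsupp c)"
  have G: "lfm G" unfolding G_def using mon_lfm cLC cnn by (auto simp: is_LC_def)
  have cG: "inG G c" unfolding inG_def G_def by (rule mon_sub)
  have c0: "Re (c 0) > 0" using blpos by (simp add: c_def shift_def)
  have cre: "\<And>q. Im (c q) = 0" using bre by (simp add: c_def shift_def)
  define y where "y = shift (sq_lc G c) (l / 2)"
  have yy: "lc_mult y y = b"
    unfolding y_def shift_mult sqrt_prod[OF G cG c0 cre] by (simp add: c_def shift_def fun_eq_iff)
  have yLR: "is_LR y" unfolding is_LR_def y_def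
    using shift_LC[OF inG_LC[OF G inG_sq_lc]] by (simp add: shift_def sq_lc_def)
  have yl: "y (l / 2) = of_real (sqrt (Re (c 0)))" by (simp add: y_def shift_def sq_lc_def sqrtr_0[OF G])
  have ynz: "y (l / 2) \<noteq> 0" using yl c0 by simp
  have ysupp: "\<And>q. y q \<noteq> 0 \<Longrightarrow> l / 2 \<le> q"
  proof -
    fix q assume "y q \<noteq> 0"
    then have "sq_lc G c (q - l / 2) \<noteq> 0" by (simp add: y_def shift_def)
    then have "q - l / 2 \<in> G" using inG_sq_lc[of G c] by (auto simp: inG_def lsupp_def)
    then show "l / 2 \<le> q" using G by (auto simp: lfm_def)
  qed
  have laml: "lam y = l / 2" using lam_eqI[of y "l/2"] ynz ysupp by blast
  have ynn: "lr_nonneg y" unfolding lr_nonneg_def lr_pos_def laml using yl c0 ynz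
    by (auto simp: lc_zero_def)
  have eq: "lr_sqrt b = y" by (rule sqrt_unique[OF yLR ynn yy])
  have amf: "at_most_finite y" unfolding at_most_finite_def using ysupp l0
    by (meson half_gt_zero_iff le_less_trans less_le_not_le not_le order.trans zero_le_divide_iff
         zero_less_numeral)
  have y0: "y 0 = of_real (sqrt (Re (b 0)))"
  proof (cases "l = 0")
    case True then show ?thesis using yl by (simp add: c_def shift_def)
  next
    case False
    then have "l > 0" using l0 by simp
    then have "b 0 = 0" using bl(2)[of 0] by force
    moreover have "y 0 = 0" using ysupp[of 0] \<open>l > 0\<close> by force
    ultimately show ?thesis by simp
  qed
  show ?thesis using eq yLR amf yy y0 by simp
qed

definition nsq :: "lcf \<Rightarrow> lcf" where
  "nsq z = lc_add (lc_mult (lc_re z) (lc_re z)) (lc_mult (lc_im z) (lc_im z))"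

lemma abs_nsq: "lc_abs z = lr_sqrt (nsq z)" by (simp add: lc_abs_def nsq_def)

lemma nsq_inG: "lfm G \<Longrightarrow> inG G z \<Longrightarrow> inG G (nsq z)"
  unfolding nsq_def by (intro inG_add inG_mult inG_re inG_im)

lemma nsq_real: "Im (nsq z q) = 0"
  unfolding nsq_def lc_add_def using real_mult[of "lc_re z" "lc_re z"] real_mult[of "lc_im z" "lc_im z"]
  by (simp add: lc_re_def lc_im_def)

lemma cm2: "complex_of_real ((cmod w)^2) = of_real (Re w) * of_real (Re w) + of_real (Im w) * of_real (Im w)"
proof -
  have "(cmod w)^2 = Re w * Re w + Im w * Im w" unfolding cmod_power2 by (simp add: power2_eq_square)
  then show ?thesis by (metis of_real_add of_real_mult)
qed

lemma nsq_0: "lfm G \<Longrightarrow> inG G z \<Longrightarrow> nsq z 0 = of_real ((cmod (z 0))^2)"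
  unfolding nsq_def lc_add_def cm2
  using mult_TT[OF _ inG_re inG_re, of G z z 0] mult_TT[OF _ inG_im inG_im, of G z z 0] TT_0[of G]
  by (simp add: lc_re_def lc_im_def cmod_power2 power2_eq_square)

lemma nsq_props: assumes z: "is_LC z" "at_most_finite z"
  shows "is_LR (nsq z) \<and> at_most_finite (nsq z) \<and> lr_nonneg (nsq z) \<and> nsq z 0 = of_real ((cmod (z 0))^2)"
proof -
  define G where "G = mon (lsupp z)"
  have G: "lfm G" unfolding G_def using z mon_lfm by (auto simp: is_LC_def at_most_finite_def lsupp_def)
  have zG: "inG G z" unfolding inG_def G_def by (rule mon_sub)
  have nG: "inG G (nsq z)" by (rule nsq_inG[OF G zG])
  have nn: "lr_nonneg (nsq z)"
  proof (cases "z = lc_zero")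
    case True
    then have "nsq z = lc_zero"
      using supp_mult[of "lc_re z" "lc_re z"] supp_mult[of "lc_im z" "lc_im z"]
      by (auto simp: nsq_def lc_add_def lc_re_def lc_im_def lc_zero_def fun_eq_iff)
    then show ?thesis by (simp add: lr_nonneg_def)
  next
    case False
    define l where "l = lam z"
    have zl: "z l \<noteq> 0" "\<And>q. z q \<noteq> 0 \<Longrightarrow> l \<le> q" using lam_prop[OF z(1) False] l_def by auto
    have "\<forall>p<l. z p = 0" using zl(2) not_le by blast
    then have lo: "\<forall>p<l. lc_re z p = 0" "\<forall>p<l. lc_im z p = 0" by (auto simp: lc_re_def lc_im_def)
    have low: "\<And>q. q < l + l \<Longrightarrow> nsq z q = 0"
      unfolding nsq_def lc_add_def using mult_low1[OF lo(1) lo(1)] mult_low1[OF lo(2) lo(2)] by simp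
    have top: "nsq z (l + l) = of_real ((cmod (z l))^2)"
      unfolding nsq_def lc_add_def mult_low2[OF lo(1) lo(1)] mult_low2[OF lo(2) lo(2)] cm2
      by (simp add: lc_re_def lc_im_def)
    have pos: "(cmod (z l))^2 > 0" using zl(1) by simp
    have "lam (nsq z) = l + l"
      by (rule lam_eqI) (use top pos low in \<open>auto simp: not_less[symmetric]\<close>)
    moreover have "nsq z \<noteq> lc_zero"
    proof
      assume "nsq z = lc_zero"
      then have "nsq z (l + l) = 0" by (simp add: lc_zero_def)
      then show False using top pos by simp
    qed
    ultimately show ?thesis unfolding lr_nonneg_def lr_pos_def using top pos by simp
  qed
  show ?thesis using nn nsq_0[OF G zG] inG_LC[OF G nG] inG_amf[OF G nG] nsq_real
    by (simp add: is_LR_def)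
qed

lemma abs_props: assumes z: "is_LC z" "at_most_finite z"
  shows "is_LR (lc_abs z) \<and> at_most_finite (lc_abs z) \<and> lc_mult (lc_abs z) (lc_abs z) = nsq z
     \<and> lc_abs z 0 = of_real (cmod (z 0))"
  using sqrt_gen[of "nsq z"] nsq_props[OF z] by (simp add: abs_nsq)


lemma inv_sq: assumes G: "lfm G" and a: "inG G a" "Re (a 0) > 0"
  shows "lc_inverse (sq_lc G a) = inv_lc G (sq_lc G a)"
proof (rule inv_unique)
  show "is_LC (sq_lc G a)" by (rule inG_LC[OF G inG_sq_lc])
  show "is_LC (inv_lc G (sq_lc G a))" by (rule inG_LC[OF G inG_inv_lc])
  have "sq_lc G a 0 \<noteq> 0" using a(2) by (simp add: sq_lc_def sqrtr_0[OF G])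
  then show "lc_mult (sq_lc G a) (inv_lc G (sq_lc G a)) = lc_one" by (rule inv_prod[OF G inG_sq_lc])
qed

lemma final_conv: assumes G: "lfm G" and aG: "\<And>k. inG G (a k)" and bG: "inG G b"
  and t: "\<And>q. (\<lambda>k. a k q) \<longlonglongrightarrow> b q" and b0: "Re (b 0) > 0"
  and are: "\<And>k q. Im (a k q) = 0" and bre: "\<And>q. Im (b q) = 0"
  and ev: "eventually (\<lambda>k. s k = lc_inverse (lr_sqrt (a k))) sequentially"
  shows "wk_conv s (lc_inverse (lr_sqrt b))"
proof -
  have "eventually (\<lambda>k. Re (a k 0) > 0) sequentially"
    using order_tendstoD(1)[OF tendsto_Re[OF t[of 0]] b0] .
  then have ev2: "eventually (\<lambda>k. s k = inv_lc G (sq_lc G (a k))) sequentially"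
    using ev by eventually_elim (simp add: sq_lc_is_sqrt[OF G aG] are inv_sq[OF G aG])
  have lim: "lc_inverse (lr_sqrt b) = inv_lc G (sq_lc G b)"
    by (simp add: sq_lc_is_sqrt[OF G bG b0 bre] inv_sq[OF G bG b0])
  have sq_t: "\<And>q. (\<lambda>k. sq_lc G (a k) q) \<longlonglongrightarrow> sq_lc G b q"
    unfolding sq_lc_def by (intro tendsto_of_real sqrt_tend[where a=a and b=b, OF G t b0])
  have b00: "sq_lc G b 0 \<noteq> 0" using b0 by (simp add: sq_lc_def sqrtr_0[OF G])
  show ?thesis unfolding lim
  proof (rule wk_reduce[OF G])
    show "eventually (\<lambda>k. inG G (s k)) sequentially"
      using ev2 by eventually_elim (simp add: inG_inv_lc)
    show "inG G (inv_lc G (sq_lc G b))" by (rule inG_inv_lc)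
    fix q
    have "(\<lambda>k. inv_lc G (sq_lc G (a k)) q) \<longlonglongrightarrow> inv_lc G (sq_lc G b) q"
      unfolding inv_lc_def by (rule inv_tend[where a="\<lambda>k. sq_lc G (a k)" and b="sq_lc G b", OF G sq_t b00])
    moreover have "eventually (\<lambda>k. inv_lc G (sq_lc G (a k)) q = s k q) sequentially"
      using ev2 by eventually_elim simp
    ultimately show "(\<lambda>k. s k q) \<longlonglongrightarrow> inv_lc G (sq_lc G b) q"
      by (rule Lim_transform_eventually)
  qed
qed

lemma amf_diff: assumes "at_most_finite a" "at_most_finite b" shows "at_most_finite (lc_diff a b)"
  unfolding at_most_finite_def lc_diff_def
proof (intro allI impI)
  fix q assume "a q - b q \<noteq> 0"
  then have "a q \<noteq> 0 \<or> b q \<noteq> 0" by auto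
  then show "0 \<le> q" using assms unfolding at_most_finite_def by blast
qed

lemma vmax: assumes z: "\<And>i. i \<in> {1..n} \<Longrightarrow> is_LC (z i) \<and> at_most_finite (z i)"
  and i0: "i0 \<in> {1..n}" and lt: "\<And>i. i \<in> {1..n} \<Longrightarrow> i \<noteq> i0 \<Longrightarrow> cmod (z i 0) < cmod (z i0 0)"
  shows "vnorm_max n z = lc_abs (z i0)"
proof -
  have ab: "\<And>i. i \<in> {1..n} \<Longrightarrow> at_most_finite (lc_abs (z i)) \<and> lc_abs (z i) 0 = of_real (cmod (z i 0))"
    using abs_props z by blast
  have pos: "\<And>i j. i \<in> {1..n} \<Longrightarrow> j \<in> {1..n} \<Longrightarrow> cmod (z i 0) < cmod (z j 0) \<Longrightarrow>
      lr_pos (lc_diff (lc_abs (z j)) (lc_abs (z i)))"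
  proof -
    fix i j assume ij: "i \<in> {1..n}" "j \<in> {1..n}" "cmod (z i 0) < cmod (z j 0)"
    let ?d = "lc_diff (lc_abs (z j)) (lc_abs (z i))"
    have d0: "?d 0 = of_real (cmod (z j 0) - cmod (z i 0))" using ab ij by (simp add: lc_diff_def)
    have "at_most_finite ?d" using ab ij amf_diff by blast
    moreover have "?d 0 \<noteq> 0" using d0 ij(3) by simp
    ultimately have "lam ?d = 0" by (rule lam0)
    then show "lr_pos ?d" unfolding lr_pos_def using d0 ij(3) \<open>?d 0 \<noteq> 0\<close>
      by (auto simp: lc_zero_def)
  qed
  show ?thesis unfolding vnorm_max_def
  proof (rule the_equality)
    show "(\<exists>i\<in>{1..n}. lc_abs (z i0) = lc_abs (z i)) \<and> (\<forall>i\<in>{1..n}. lr_le (lc_abs (z i)) (lc_abs (z i0)))"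
    proof (intro conjI ballI)
      show "\<exists>i\<in>{1..n}. lc_abs (z i0) = lc_abs (z i)" using i0 by blast
      fix i assume i: "i \<in> {1..n}"
      show "lr_le (lc_abs (z i)) (lc_abs (z i0))"
      proof (cases "i = i0")
        case True then show ?thesis by (simp add: lr_le_def lr_nonneg_def lc_diff_def lc_zero_def)
      next
        case False then show ?thesis using pos[OF i i0 lt[OF i False]] by (simp add: lr_le_def lr_nonneg_def)
      qed
    qed
    fix m assume m: "(\<exists>i\<in>{1..n}. m = lc_abs (z i)) \<and> (\<forall>i\<in>{1..n}. lr_le (lc_abs (z i)) m)"
    then obtain i where i: "i \<in> {1..n}" "m = lc_abs (z i)" by blast
    show "m = lc_abs (z i0)"
    proof (cases "i = i0")
      case True then show ?thesis using i by simp
    next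
      case False
      let ?d = "lc_diff (lc_abs (z i)) (lc_abs (z i0))"
      have "lr_nonneg ?d" using m i0 i by (auto simp: lr_le_def)
      moreover have d0: "?d 0 = of_real (cmod (z i 0) - cmod (z i0 0))" using ab i i0 by (simp add: lc_diff_def)
      moreover have dn: "?d 0 \<noteq> 0" using d0 lt[OF i(1) False] by simp
      moreover have "at_most_finite ?d" using ab i i0 amf_diff by blast
      then have "lam ?d = 0" using dn by (rule lam0)
      ultimately show ?thesis using lt[OF i(1) False] by (auto simp: lr_nonneg_def lr_pos_def lc_zero_def)
    qed
  qed
qed

lemma lc_sum_cong: "(\<And>i. i \<in> I \<Longrightarrow> f i = g i) \<Longrightarrow> lc_sum f I = lc_sum g I"
  unfolding lc_sum_def by (rule ext) (rule sum.cong, auto)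

lemma mult_zero_left: "lc_mult lc_zero b q = 0"
  by (simp add: lc_mult_def lc_zero_def)



theorem mainTheorem7:
  fixes n :: nat
    and A :: "nat \<Rightarrow> nat \<Rightarrow> lcf"
    and \<nu> :: "nat \<Rightarrow> lcf"
    and x :: "nat \<Rightarrow> lcf"
    and w :: "nat \<Rightarrow> nat \<Rightarrow> lcf"
    and \<xi> :: "nat \<Rightarrow> nat \<Rightarrow> lcf"
  assumes n1: "n \<ge> 1"
    and A_LC: "is_LC_mat n A"
    and nu_LC: "\<forall>j\<in>{1..n}. is_LC (\<nu> j)"
    and diag: "diagonalizable_with n A \<nu>"
    and nu_fin: "\<forall>j\<in>{1..n}. at_most_finite (\<nu> j)"
    and nu1: "\<nu> 1 0 = 1"
    and nu2: "n \<ge> 2 \<longrightarrow> cmod (\<nu> 2 0) < 1"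
    and nu_dec: "\<forall>j. 2 \<le> j \<and> j < n \<longrightarrow> cmod (\<nu> (j + 1) 0) \<le> cmod (\<nu> j 0)"
    and x_LC: "\<forall>i\<in>{1..n}. is_LC (x i)"
    and w_LC: "\<forall>j\<in>{1..n}. \<forall>i\<in>{1..n}. is_LC (w j i)"
    and x_sum: "\<forall>i\<in>{1..n}. x i = lc_sum (\<lambda>j. w j i) {1..n}"
    and w_eig: "\<forall>j\<in>{1..n}. \<forall>i\<in>{1..n}. mat_vec n A (w j) i = lc_mult (\<nu> j) (w j i)"
    and w_fin: "\<forall>j\<in>{1..n}. \<forall>i\<in>{1..n}. at_most_finite (w j i)"
    and w1_nz: "\<exists>i\<in>{1..n}. w 1 i 0 \<noteq> 0"
    and xi_def: "\<forall>k i. \<xi> k i = lc_sum (\<lambda>j. lc_mult (lc_pow (lc_divide (\<nu> j) (\<nu> 1)) k) (w j i)) {2..n}"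
  shows "(\<forall>i\<in>{1..n}. regular_seq (\<lambda>k. \<xi> k i) \<and> wk_conv (\<lambda>k. \<xi> k i) lc_zero)
       \<and> wk_conv (\<lambda>k. lc_inverse (vnorm2 n (\<lambda>i. lc_add (w 1 i) (\<xi> k i))))
                 (lc_inverse (vnorm2 n (w 1)))
       \<and> ((\<exists>!i0. i0 \<in> {1..n} \<and> cmod (w 1 i0 0) = Max {cmod (w 1 i 0) | i. i \<in> {1..n}})
           \<longrightarrow> wk_conv (\<lambda>k. lc_inverse (vnorm_max n (\<lambda>i. lc_add (w 1 i) (\<xi> k i))))
                       (lc_inverse (vnorm_max n (w 1))))"
proof -
  have n1': "1 \<in> {1..n}" using n1 by simp
  define S0 where "S0 = (\<Union>j\<in>{1..n}. lsupp (\<nu> j)) \<union> (\<Union>j\<in>{1..n}. \<Union>i\<in>{1..n}. lsupp (w j i))"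
  have l1: "left_finite (\<Union>j\<in>{1..n}. lsupp (\<nu> j))"
    by (rule lf_UN) (use nu_LC in \<open>simp_all add: is_LC_def\<close>)
  have l2: "left_finite (\<Union>i\<in>{1..n}. lsupp (w j i))" if "j \<in> {1..n}" for j
    by (rule lf_UN) (use w_LC that in \<open>simp_all add: is_LC_def\<close>)
  have l3: "left_finite (\<Union>j\<in>{1..n}. \<Union>i\<in>{1..n}. lsupp (w j i))"
    by (rule lf_UN) (use l2 in simp_all)
  have S0lf: "left_finite S0" unfolding S0_def by (rule lf_union[OF l1 l3])
  have S0nn: "\<forall>x\<in>S0. 0 \<le> x" unfolding S0_def using nu_fin w_fin
    by (auto simp: at_most_finite_def lsupp_def)
  define G where "G = mon S0"
  have G: "lfm G" unfolding G_def by (rule mon_lfm[OF S0lf S0nn])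
  have nuG: "\<And>j. j \<in> {1..n} \<Longrightarrow> inG G (\<nu> j)"
  proof -
    fix j assume "j \<in> {1..n}"
    then have "lsupp (\<nu> j) \<subseteq> S0" unfolding S0_def by blast
    then show "inG G (\<nu> j)" unfolding inG_def G_def using mon_sub[of S0] by (rule order_trans)
  qed
  have wG: "\<And>j i. j \<in> {1..n} \<Longrightarrow> i \<in> {1..n} \<Longrightarrow> inG G (w j i)"
  proof -
    fix j i assume "j \<in> {1..n}" "i \<in> {1..n}"
    then have "lsupp (w j i) \<subseteq> S0" unfolding S0_def by blast
    then show "inG G (w j i)" unfolding inG_def G_def using mon_sub[of S0] by (rule order_trans)
  qed
  define iv where "iv = inv_lc G (\<nu> 1)"
  have iv: "lc_inverse (\<nu> 1) = iv" unfolding iv_def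
    by (rule inv_unique[OF inG_LC[OF G nuG[OF n1']] inG_LC[OF G inG_inv_lc] inv_prod[OF G nuG[OF n1']]])
       (use nu1 in \<open>simp add: One_nat_def\<close>)
  define u where "u = (\<lambda>j. lc_divide (\<nu> j) (\<nu> 1))"
  have u_eq: "\<And>j. u j = lc_mult (\<nu> j) iv" unfolding u_def lc_divide_def iv by (rule refl)
  have uG: "\<And>j. j \<in> {1..n} \<Longrightarrow> inG G (u j)"
    unfolding u_eq iv_def by (intro inG_mult[OF G] nuG inG_inv_lc)
  have u0: "\<And>j. j \<in> {1..n} \<Longrightarrow> u j 0 = \<nu> j 0"
    unfolding u_eq iv_def using mult_TT[OF G nuG inG_inv_lc] TT_0[OF G] invc_0[OF G] nu1
    by (simp add: inv_lc_def)
  have nub: "\<And>j. 2 \<le> j \<and> j \<le> n \<longrightarrow> cmod (\<nu> j 0) \<le> cmod (\<nu> 2 0)"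
  proof -
    fix j show "2 \<le> j \<and> j \<le> n \<longrightarrow> cmod (\<nu> j 0) \<le> cmod (\<nu> 2 0)"
    proof (induction j)
      case 0 then show ?case by simp
    next
      case (Suc j)
      show ?case
      proof (cases "Suc j = 2")
        case True then show ?thesis by (simp only:) simp
      next
        case False
        show ?thesis
        proof
          assume h: "2 \<le> Suc j \<and> Suc j \<le> n"
          then have j2: "2 \<le> j \<and> j < n" using False by simp
          then have a1: "cmod (\<nu> (j + 1) 0) \<le> cmod (\<nu> j 0)" using nu_dec by blast
          have a2: "cmod (\<nu> j 0) \<le> cmod (\<nu> 2 0)" using Suc.IH j2 by simp
          show "cmod (\<nu> (Suc j) 0) \<le> cmod (\<nu> 2 0)" using a1 a2 by simp
        qed
      qed
    qed
  qed
  have ulow: "\<And>j. j \<in> {2..n} \<Longrightarrow> cmod (u j 0) < 1"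
  proof -
    fix j assume j: "j \<in> {2..n}"
    then have "cmod (\<nu> j 0) \<le> cmod (\<nu> 2 0)" using nub by simp
    moreover have "cmod (\<nu> 2 0) < 1" using nu2 j by simp
    moreover have "j \<in> {1..n}" using j by simp
    ultimately show "cmod (u j 0) < 1" using u0 by simp
  qed
  have xi_eq: "\<And>k i. \<xi> k i = lc_sum (\<lambda>j. lc_mult (lc_pow (u j) k) (w j i)) {2..n}"
    using xi_def by (simp add: u_def)
  have xiG: "\<And>k i. i \<in> {1..n} \<Longrightarrow> inG G (\<xi> k i)"
    unfolding xi_eq by (intro inG_sum inG_mult[OF G] inG_pow[OF G] uG wG) auto
  have xit: "\<And>i q. i \<in> {1..n} \<Longrightarrow> (\<lambda>k. \<xi> k i q) \<longlonglongrightarrow> 0"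
  proof -
    fix i q assume i: "i \<in> {1..n}"
    have "\<And>j. j \<in> {2..n} \<Longrightarrow> (\<lambda>k. lc_mult (lc_pow (u j) k) (w j i) q) \<longlonglongrightarrow> lc_mult lc_zero (w j i) q"
    proof -
      fix j assume j: "j \<in> {2..n}"
      then have j1: "j \<in> {1..n}" by simp
      show "(\<lambda>k. lc_mult (lc_pow (u j) k) (w j i) q) \<longlonglongrightarrow> lc_mult lc_zero (w j i) q"
        by (rule mult_tend[where a="\<lambda>k. lc_pow (u j) k" and b="\<lambda>k. w j i", OF G])
           (auto simp: inG_pow[OF G uG[OF j1]] inG_zero inG_zero[unfolded lc_zero_def] wG[OF j1 i] pow_tend[OF G uG[OF j1] ulow[OF j]]
             lc_zero_def)
    qed
    then have "(\<lambda>k. \<Sum>j\<in>{2..n}. lc_mult (lc_pow (u j) k) (w j i) q) \<longlonglongrightarrow> 0"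
      by (intro tendsto_null_sum) (simp add: mult_zero_left)
    then show "(\<lambda>k. \<xi> k i q) \<longlonglongrightarrow> 0" unfolding xi_eq lc_sum_def .
  qed
  have part1: "\<forall>i\<in>{1..n}. regular_seq (\<lambda>k. \<xi> k i) \<and> wk_conv (\<lambda>k. \<xi> k i) lc_zero"
  proof
    fix i assume i: "i \<in> {1..n}"
    have "(\<Union>k. lsupp (\<xi> k i)) \<subseteq> G" using xiG[OF i] by (auto simp: inG_def)
    then have "regular_seq (\<lambda>k. \<xi> k i)" unfolding regular_seq_def
      using G lf_subset by (auto simp: lfm_def)
    moreover have "wk_conv (\<lambda>k. \<xi> k i) lc_zero"
      by (rule wk_reduce[OF G]) (auto simp: xiG[OF i] inG_zero inG_zero[unfolded lc_zero_def] xit[OF i] lc_zero_def)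
    ultimately show "regular_seq (\<lambda>k. \<xi> k i) \<and> wk_conv (\<lambda>k. \<xi> k i) lc_zero" by blast
  qed
  define v where "v = (\<lambda>k i. lc_add (w 1 i) (\<xi> k i))"
  have vG: "\<And>k i. i \<in> {1..n} \<Longrightarrow> inG G (v k i)" unfolding v_def
    using inG_add wG[OF n1'] xiG by blast
  have vt: "\<And>i q. i \<in> {1..n} \<Longrightarrow> (\<lambda>k. v k i q) \<longlonglongrightarrow> w 1 i q"
    unfolding v_def lc_add_def using tendsto_add[OF tendsto_const xit] by fastforce
  have nsqt: "\<And>i q. i \<in> {1..n} \<Longrightarrow> (\<lambda>k. nsq (v k i) q) \<longlonglongrightarrow> nsq (w 1 i) q"
  proof -
    fix i q assume i: "i \<in> {1..n}"
    have re: "\<And>q. (\<lambda>k. lc_re (v k i) q) \<longlonglongrightarrow> lc_re (w 1 i) q"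
      unfolding lc_re_def by (intro tendsto_of_real tendsto_Re vt[OF i])
    have im: "\<And>q. (\<lambda>k. lc_im (v k i) q) \<longlonglongrightarrow> lc_im (w 1 i) q"
      unfolding lc_im_def by (intro tendsto_of_real tendsto_Im vt[OF i])
    show "(\<lambda>k. nsq (v k i) q) \<longlonglongrightarrow> nsq (w 1 i) q"
      unfolding nsq_def lc_add_def
      by (intro tendsto_add mult_tend[OF G] inG_re inG_im vG[OF i] wG[OF n1' i] re im)
  qed
  have vLC: "\<And>k i. i \<in> {1..n} \<Longrightarrow> is_LC (v k i) \<and> at_most_finite (v k i)"
    using vG inG_LC[OF G] inG_amf[OF G] by blast
  have wLC: "\<And>i. i \<in> {1..n} \<Longrightarrow> is_LC (w 1 i) \<and> at_most_finite (w 1 i)"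
    using wG[OF n1'] inG_LC[OF G] inG_amf[OF G] by blast
  have nsqG: "\<And>z. inG G z \<Longrightarrow> inG G (nsq z)" using nsq_inG[OF G] .
  have nsq0: "\<And>z. inG G z \<Longrightarrow> Re (nsq z 0) = (cmod (z 0))^2" using nsq_0[OF G] by simp
  define Sk where "Sk = (\<lambda>k. lc_sum (\<lambda>i. nsq (v k i)) {1..n})"
  define S where "S = lc_sum (\<lambda>i. nsq (w 1 i)) {1..n}"
  have absq: "\<And>z. is_LC z \<Longrightarrow> at_most_finite z \<Longrightarrow> lc_mult (lc_abs z) (lc_abs z) = nsq z"
    using abs_props by blast
  have vn: "\<And>k. vnorm2 n (v k) = lr_sqrt (Sk k)"
    unfolding vnorm2_def Sk_def
    by (intro arg_cong[where f=lr_sqrt] lc_sum_cong absq) (blast dest: vLC)+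
  have wn: "vnorm2 n (w 1) = lr_sqrt S"
    unfolding vnorm2_def S_def
    by (intro arg_cong[where f=lr_sqrt] lc_sum_cong absq) (blast dest: wLC)+
  have SkG: "\<And>k. inG G (Sk k)" unfolding Sk_def by (intro inG_sum nsqG vG)
  have SG: "inG G S" unfolding S_def by (intro inG_sum nsqG wG[OF n1'])
  have Skt: "\<And>q. (\<lambda>k. Sk k q) \<longlonglongrightarrow> S q" unfolding Sk_def S_def lc_sum_def
    by (intro tendsto_sum nsqt)
  have Skre: "\<And>k q. Im (Sk k q) = 0" unfolding Sk_def lc_sum_def by (simp add: Im_sum nsq_real)
  have Sre: "\<And>q. Im (S q) = 0" unfolding S_def lc_sum_def by (simp add: Im_sum nsq_real)
  obtain i1 where i1: "i1 \<in> {1..n}" "w 1 i1 0 \<noteq> 0" using w1_nz by blast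
  have S0pos: "Re (S 0) > 0"
  proof -
    have "Re (S 0) = (\<Sum>i\<in>{1..n}. (cmod (w 1 i 0))^2)"
      unfolding S_def lc_sum_def Re_sum using nsq0 wG[OF n1'] by simp
    also have "\<dots> > 0" using i1 by (intro sum_pos2[where i=i1]) auto
    finally show ?thesis .
  qed
  have vn': "\<And>k. vnorm2 n (\<lambda>i. lc_add (w 1 i) (\<xi> k i)) = lr_sqrt (Sk k)"
    using vn unfolding v_def .
  have evn: "eventually (\<lambda>k. lc_inverse (vnorm2 n (\<lambda>i. lc_add (w 1 i) (\<xi> k i))) = lc_inverse (lr_sqrt (Sk k))) sequentially"
    by (simp only: vn') simp
  have part2: "wk_conv (\<lambda>k. lc_inverse (vnorm2 n (\<lambda>i. lc_add (w 1 i) (\<xi> k i))))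
                 (lc_inverse (vnorm2 n (w 1)))"
    unfolding wn
    by (rule final_conv[where a=Sk and b=S, OF G SkG SG Skt S0pos Skre Sre evn])
  have part3: "(\<exists>!i0. i0 \<in> {1..n} \<and> cmod (w 1 i0 0) = Max {cmod (w 1 i 0) | i. i \<in> {1..n}})
           \<longrightarrow> wk_conv (\<lambda>k. lc_inverse (vnorm_max n (\<lambda>i. lc_add (w 1 i) (\<xi> k i))))
                       (lc_inverse (vnorm_max n (w 1)))"
  proof
    assume "\<exists>!i0. i0 \<in> {1..n} \<and> cmod (w 1 i0 0) = Max {cmod (w 1 i 0) | i. i \<in> {1..n}}"
    then obtain i0 where i0: "i0 \<in> {1..n}" "cmod (w 1 i0 0) = Max {cmod (w 1 i 0) | i. i \<in> {1..n}}"
      and uq: "\<And>i. i \<in> {1..n} \<Longrightarrow> cmod (w 1 i 0) = Max {cmod (w 1 i 0) | i. i \<in> {1..n}} \<Longrightarrow> i = i0"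
      by blast
    let ?X = "{cmod (w 1 i 0) | i. i \<in> {1..n}}"
    have fX: "finite ?X" by simp
    have le: "\<And>i. i \<in> {1..n} \<Longrightarrow> cmod (w 1 i 0) \<le> cmod (w 1 i0 0)"
    proof -
      fix i assume i: "i \<in> {1..n}"
      have "cmod (w 1 i 0) \<in> ?X" using i by blast
      then have "cmod (w 1 i 0) \<le> Max ?X" by (rule Max_ge[OF fX])
      then show "cmod (w 1 i 0) \<le> cmod (w 1 i0 0)" using i0(2) by simp
    qed
    have lt: "\<And>i. i \<in> {1..n} \<Longrightarrow> i \<noteq> i0 \<Longrightarrow> cmod (w 1 i 0) < cmod (w 1 i0 0)"
    proof -
      fix i assume i: "i \<in> {1..n}" "i \<noteq> i0"
      have "cmod (w 1 i 0) \<noteq> cmod (w 1 i0 0)"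
      proof
        assume "cmod (w 1 i 0) = cmod (w 1 i0 0)"
        then have "cmod (w 1 i 0) = Max ?X" using i0(2) by simp
        then have "i = i0" by (rule uq[OF i(1)])
        then show False using i(2) by simp
      qed
      then show "cmod (w 1 i 0) < cmod (w 1 i0 0)" using le[OF i(1)] by simp
    qed
    have "0 < cmod (w 1 i1 0)" using i1(2) by simp
    then have Mpos: "cmod (w 1 i0 0) > 0" using le[OF i1(1)] by (rule less_le_trans)
    have wmax: "vnorm_max n (w 1) = lc_abs (w 1 i0)" by (rule vmax[where z="w 1", OF wLC i0(1) lt])
    have ct: "\<And>i. i \<in> {1..n} \<Longrightarrow> (\<lambda>k. cmod (v k i 0)) \<longlonglongrightarrow> cmod (w 1 i 0)"
      by (intro tendsto_norm vt)
    have "\<forall>i\<in>{1..n} - {i0}. eventually (\<lambda>k. cmod (v k i 0) < cmod (v k i0 0)) sequentially"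
    proof
      fix i assume "i \<in> {1..n} - {i0}"
      then have i: "i \<in> {1..n}" "i \<noteq> i0" by auto
      have "(\<lambda>k. cmod (v k i0 0) - cmod (v k i 0)) \<longlonglongrightarrow> cmod (w 1 i0 0) - cmod (w 1 i 0)"
        by (intro tendsto_diff ct i i0(1))
      moreover have "cmod (w 1 i0 0) - cmod (w 1 i 0) > 0" using lt[OF i] by simp
      ultimately have "eventually (\<lambda>k. cmod (v k i0 0) - cmod (v k i 0) > 0) sequentially"
        by (rule order_tendstoD(1))
      then show "eventually (\<lambda>k. cmod (v k i 0) < cmod (v k i0 0)) sequentially" by simp
    qed
    then have ev1: "eventually (\<lambda>k. \<forall>i\<in>{1..n} - {i0}. cmod (v k i 0) < cmod (v k i0 0)) sequentially"
      by (rule eventually_ball_finite[rotated]) simp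
    have ev: "eventually (\<lambda>k. lc_inverse (vnorm_max n (\<lambda>i. lc_add (w 1 i) (\<xi> k i))) = lc_inverse (lr_sqrt (nsq (v k i0)))) sequentially"
      using ev1
    proof eventually_elim
      case (elim k)
      have "vnorm_max n (v k) = lc_abs (v k i0)"
        by (rule vmax[where z="v k", OF vLC i0(1)]) (use elim in auto)
      moreover have "v k = (\<lambda>i. lc_add (w 1 i) (\<xi> k i))" unfolding v_def by (rule refl)
      ultimately show ?case by (simp only: abs_nsq)
    qed
    have b0: "Re (nsq (w 1 i0) 0) > 0" using nsq0[OF wG[OF n1' i0(1)]] Mpos by simp
    show "wk_conv (\<lambda>k. lc_inverse (vnorm_max n (\<lambda>i. lc_add (w 1 i) (\<xi> k i))))
                       (lc_inverse (vnorm_max n (w 1)))"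
      unfolding wmax abs_nsq
      by (rule final_conv[where a="\<lambda>k. nsq (v k i0)" and b="nsq (w 1 i0)", OF G nsqG[OF vG[OF i0(1)]] nsqG[OF wG[OF n1' i0(1)]] nsqt[OF i0(1)] b0
            nsq_real nsq_real ev])
  qed
  show ?thesis using part1 part2 part3 by blast
qed


end
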